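(* For non-negative integers $p_1,p_2,r$, integers $k_1,k_2$ and $x_1,x_2\in\mathbb{C}$, $$\sum_{j_1=0}^{p_1}\sum_{j_2=0}^{p_2}\sum_{l=0}^{j_1+j_2}\binom{p_1}{j_1}\binom{p_2}{j_2}B^{(k_1)}_{p_1-j_1}(x_1)B^{(k_2)}_{p_2-j_2}(x_2)S(j_1+j_2,l)(-1)^{l}(l+r)!=r!\,B^{(k_1)}_{p_1}(x_1-r-1)\,B^{(k_2)}_{p_2}(x_2-r-1),$$ and the left-hand side also equals $$\sum_{j_1=0}^{p_1}\sum_{j_2=0}^{p_2}\sum_{l=0}^{j_1+j_2}\binom{p_1}{j_1}\binom{p_2}{j_2}B^{(k_1)}_{p_1-j_1}(x_1-1)B^{(k_2)}_{p_2-j_2}(x_2-1)S(j_1+j_2+1,l+1)(-1)^{l}(l+r)!.$$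
   Context: $S(n,l)$ denotes the Stirling numbers of the second kind, $S(n,l)=\frac{1}{l!}\sum_{j=0}^{l}(-1)^j\binom{l}{j}(l-j)^n$ (with $0^0=1$). For an integer $k$, a non-negative integer $n$ and $x\in\mathbb{C}$, the poly-Bernoulli polynomial is $B_{n}^{(k)}(x)=\sum_{l=0}^{n}\frac{1}{(l+1)^{k}}\sum_{j=0}^{l}(-1)^{j}\binom{l}{j}(j+x)^{n}$. *)

theory Defs
  imports Complex_Main
begin

text \<open>Stirling numbers of the second kind, via the explicit formula of the paper
  (with 0^0 = 1, which holds for HOL's power).\<close>
definition stirling2 :: "nat \<Rightarrow> nat \<Rightarrow> int" where
  "stirling2 n l = (\<Sum>j=0..l. (-1)^j * int (l choose j) * int (l - j) ^ n) div int (fact l)"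

definition polyB :: "int \<Rightarrow> nat \<Rightarrow> complex \<Rightarrow> complex" where
  "polyB k n x = (\<Sum>l=0..n. inverse ((of_nat (l+1)) powi k) *
       (\<Sum>j=0..l. (-1)^j * of_nat (l choose j) * (of_nat j + x)^n))"

end

theory Submission
  imports Defs "HOL-Combinatorics.Stirling"
begin

definition T :: "nat \<Rightarrow> nat \<Rightarrow> int" where
  "T n l = (\<Sum>j\<le>l. (-1)^j * int (l choose j) * int (l - j) ^ n)"

lemma T_step: "T (Suc n) (Suc m) = int (Suc m) * (T n (Suc m) + T n m)"
proof -
  define A where "A = (\<Sum>j\<le>Suc m. (-1)^j * int (m choose j) * int (Suc m - j) ^ n)"
  have 1: "T (Suc n) (Suc m) = int (Suc m) * A"
    unfolding T_def A_def sum_distrib_left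
  proof (rule sum.cong[OF refl])
    fix j assume "j \<in> {..Suc m}"
    have h: "int (Suc m choose j) * int (Suc m - j) = int (Suc m) * int (m choose j)"
      using binomial_absorb_comp[of "Suc m" j] by (metis diff_Suc_1 of_nat_mult mult.commute)
    have "(-1)^j * int (Suc m choose j) * int (Suc m - j) ^ Suc n
       = (-1)^j * (int (Suc m choose j) * int (Suc m - j)) * int (Suc m - j) ^ n"
      by (simp only: power_Suc mult.assoc)
    also have "\<dots> = int (Suc m) * ((-1)^j * int (m choose j) * int (Suc m - j) ^ n)"
      by (simp only: h mult.assoc mult.left_commute)
    finally show "(-1)^j * int (Suc m choose j) * int (Suc m - j) ^ Suc n =
      int (Suc m) * ((-1)^j * int (m choose j) * int (Suc m - j) ^ n)" .
  qed
  have 2: "T n (Suc m) = A - T n m"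
  proof -
    have "T n (Suc m) = (\<Sum>j\<le>Suc m. (-1)^j * int (Suc m choose j) * int (Suc m - j) ^ n)"
      by (simp only: T_def)
    also have "\<dots> = 1 * int (Suc m) ^ n + (\<Sum>i\<le>m. (-1)^Suc i * int (Suc m choose Suc i) * int (m - i) ^ n)"
      by (subst sum.atMost_Suc_shift) simp
    also have "(\<Sum>i\<le>m. (-1)^Suc i * int (Suc m choose Suc i) * int (m - i) ^ n)
       = (\<Sum>i\<le>m. (-1)^Suc i * int (m choose Suc i) * int (m - i) ^ n)
         + (\<Sum>i\<le>m. (-1)^Suc i * int (m choose i) * int (m - i) ^ n)"
      unfolding sum.distrib[symmetric] by (rule sum.cong[OF refl]) (simp add: algebra_simps)
    also have "1 * int (Suc m) ^ n + ((\<Sum>i\<le>m. (-1)^Suc i * int (m choose Suc i) * int (m - i) ^ n)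
         + (\<Sum>i\<le>m. (-1)^Suc i * int (m choose i) * int (m - i) ^ n))
       = (1 * int (Suc m) ^ n + (\<Sum>i\<le>m. (-1)^Suc i * int (m choose Suc i) * int (m - i) ^ n))
         + (\<Sum>i\<le>m. (-1)^Suc i * int (m choose i) * int (m - i) ^ n)"
      by (simp only: add.assoc)
    also have "1 * int (Suc m) ^ n + (\<Sum>i\<le>m. (-1)^Suc i * int (m choose Suc i) * int (m - i) ^ n) = A"
      unfolding A_def by (subst sum.atMost_Suc_shift) simp
    also have "(\<Sum>i\<le>m. (-1)^Suc i * int (m choose i) * int (m - i) ^ n) = - T n m"
      unfolding T_def sum_negf[symmetric] by (rule sum.cong[OF refl]) simp
    finally show ?thesis by simp
  qed
  show ?thesis using 1 2 by simp
qed

lemma T_Stirling: "T n l = fact l * int (Stirling n l)"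
proof (induction n arbitrary: l)
  case 0
  show ?case
  proof (cases l)
    case 0 then show ?thesis by (simp add: T_def)
  next
    case (Suc m)
    have "T 0 l = (\<Sum>i\<le>l. (-1)^i * of_nat (l choose i))" by (simp add: T_def)
    also have "\<dots> = 0" by (rule choose_alternating_sum) (simp add: Suc)
    finally show ?thesis by (simp add: Suc)
  qed
next
  case (Suc n)
  show ?case
  proof (cases l)
    case 0 then show ?thesis by (simp add: T_def)
  next
    case (Suc m)
    have "T (Suc n) l = int (Suc m) * (fact (Suc m) * int (Stirling n (Suc m)) + fact m * int (Stirling n m))"
      by (simp only: Suc T_step Suc.IH)
    also have "\<dots> = fact (Suc m) * (int (Suc m) * int (Stirling n (Suc m)) + int (Stirling n m))"
      by (simp only: fact_Suc of_nat_mult) (simp add: algebra_simps)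
    also have "\<dots> = fact l * int (Stirling (Suc n) l)"
      by (simp only: Suc Stirling.simps of_nat_add of_nat_mult)
    finally show ?thesis .
  qed
qed

lemma stirling2_Stirling: "stirling2 n l = int (Stirling n l)"
proof -
  have "stirling2 n l = T n l div fact l"
    by (simp only: stirling2_def T_def atLeast0AtMost of_nat_fact)
  also have "\<dots> = int (Stirling n l)" by (simp only: T_Stirling) simp
  finally show ?thesis .
qed

definition ff :: "complex \<Rightarrow> nat \<Rightarrow> complex" where
  "ff x l = (\<Prod>i<l. x - of_nat i)"

lemma ff_0[simp]: "ff x 0 = 1" by (simp add: ff_def)
lemma ff_Suc: "ff x (Suc l) = ff x l * (x - of_nat l)" by (simp add: ff_def)

lemma stir_ff: "(\<Sum>l\<le>n. of_nat (Stirling n l) * ff x l) = x^n"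
proof (induction n)
  case 0 then show ?case by simp
next
  case (Suc n)
  define f where "f l = of_nat l * of_nat (Stirling n l) * ff x l" for l
  have s1: "(\<Sum>l\<le>n. f (Suc l)) = (\<Sum>l\<le>n. f l)"
  proof -
    have "(\<Sum>l\<le>Suc n. f l) = f 0 + (\<Sum>l\<le>n. f (Suc l))" by (rule sum.atMost_Suc_shift)
    moreover have "(\<Sum>l\<le>Suc n. f l) = (\<Sum>l\<le>n. f l) + f (Suc n)" by simp
    moreover have "f 0 = 0" "f (Suc n) = 0" by (simp_all add: f_def)
    ultimately show ?thesis by simp
  qed
  have "(\<Sum>l\<le>Suc n. of_nat (Stirling (Suc n) l) * ff x l)
      = (\<Sum>l\<le>n. of_nat (Stirling (Suc n) (Suc l)) * ff x (Suc l))"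
    by (subst sum.atMost_Suc_shift) simp
  also have "\<dots> = (\<Sum>l\<le>n. f (Suc l)) + (\<Sum>l\<le>n. of_nat (Stirling n l) * ff x l * (x - of_nat l))"
    by (simp add: f_def sum.distrib[symmetric] ff_Suc algebra_simps)
  also have "\<dots> = (\<Sum>l\<le>n. f l) + (\<Sum>l\<le>n. of_nat (Stirling n l) * ff x l * (x - of_nat l))"
    by (simp only: s1)
  also have "\<dots> = (\<Sum>l\<le>n. of_nat (Stirling n l) * ff x l * x)"
    unfolding f_def sum.distrib[symmetric] by (rule sum.cong) (simp_all add: algebra_simps)
  also have "\<dots> = x ^ Suc n" by (simp add: sum_distrib_right[symmetric] Suc.IH)
  finally show ?case .
qed

lemma stir_ff2: "(\<Sum>l\<le>n. of_nat (Stirling (Suc n) (Suc l)) * ff (x - 1) l) = x^n"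
proof (induction n)
  case 0 then show ?case by simp
next
  case (Suc n)
  have key: "x * ff (x-1) l = ff (x-1) (Suc l) + of_nat (Suc l) * ff (x-1) l" for l
    by (simp add: ff_Suc algebra_simps)
  have "(\<Sum>l\<le>Suc n. of_nat (Stirling (Suc (Suc n)) (Suc l)) * ff (x - 1) l)
    = (\<Sum>l\<le>Suc n. of_nat (Suc l) * of_nat (Stirling (Suc n) (Suc l)) * ff (x - 1) l)
      + (\<Sum>l\<le>Suc n. of_nat (Stirling (Suc n) l) * ff (x - 1) l)"
    by (simp add: sum.distrib[symmetric] algebra_simps)
  also have "(\<Sum>l\<le>Suc n. of_nat (Suc l) * of_nat (Stirling (Suc n) (Suc l)) * ff (x - 1) l)
     = (\<Sum>l\<le>n. of_nat (Suc l) * of_nat (Stirling (Suc n) (Suc l)) * ff (x - 1) l)"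
    by simp
  also have "(\<Sum>l\<le>Suc n. of_nat (Stirling (Suc n) l) * ff (x - 1) l)
     = (\<Sum>l\<le>n. of_nat (Stirling (Suc n) (Suc l)) * ff (x - 1) (Suc l))"
    by (subst sum.atMost_Suc_shift) simp
  also have "(\<Sum>l\<le>n. of_nat (Suc l) * of_nat (Stirling (Suc n) (Suc l)) * ff (x - 1) l)
      + (\<Sum>l\<le>n. of_nat (Stirling (Suc n) (Suc l)) * ff (x - 1) (Suc l))
      = (\<Sum>l\<le>n. of_nat (Stirling (Suc n) (Suc l)) * (x * ff (x - 1) l))"
    by (simp add: key sum.distrib[symmetric] algebra_simps)
  also have "\<dots> = x * (\<Sum>l\<le>n. of_nat (Stirling (Suc n) (Suc l)) * ff (x - 1) l)"
    unfolding sum_distrib_left by (rule sum.cong) (simp_all add: algebra_simps)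
  also have "\<dots> = x ^ Suc n" by (simp only: Suc.IH power_Suc)
  finally show ?case .
qed

definition cB :: "int \<Rightarrow> nat \<Rightarrow> complex" where
  "cB k l = inverse ((of_nat (l+1)) powi k)"

definition D :: "nat \<Rightarrow> nat \<Rightarrow> complex \<Rightarrow> complex" where
  "D l m x = (\<Sum>j\<le>l. (-1)^j * of_nat (l choose j) * (of_nat j + x)^m)"

lemma D_Suc: "D (Suc l) m x = D l m x - D l m (x + 1)"
proof -
  define g where "g j = (of_nat j + x)^m" for j
  have gS: "(of_nat i + (x + 1))^m = g (Suc i)" for i by (simp add: g_def algebra_simps)
  have "D (Suc l) m x = (\<Sum>j\<le>Suc l. (-1)^j * of_nat (Suc l choose j) * g j)"
    by (simp add: D_def g_def)
  also have "\<dots> = g 0 + (\<Sum>i\<le>l. (-1)^Suc i * of_nat (Suc l choose Suc i) * g (Suc i))"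
    by (subst sum.atMost_Suc_shift) simp
  also have "\<dots> = (g 0 + (\<Sum>i\<le>l. (-1)^Suc i * of_nat (l choose Suc i) * g (Suc i)))
      - (\<Sum>i\<le>l. (-1)^i * of_nat (l choose i) * g (Suc i))"
    by (simp add: sum.distrib[symmetric] sum_subtractf[symmetric] algebra_simps)
  also have "g 0 + (\<Sum>i\<le>l. (-1)^Suc i * of_nat (l choose Suc i) * g (Suc i))
     = (\<Sum>j\<le>Suc l. (-1)^j * of_nat (l choose j) * g j)"
    by (subst sum.atMost_Suc_shift) simp
  also have "\<dots> = D l m x" by (simp add: D_def g_def)
  also have "(\<Sum>i\<le>l. (-1)^i * of_nat (l choose i) * g (Suc i)) = D l m (x + 1)"
    by (simp add: D_def gS)
  finally show ?thesis .
qed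

lemma D_shift: "D l m (x + 1) = (\<Sum>i\<le>m. of_nat (m choose i) * D l i x)"
proof -
  have e: "(of_nat j + (x + 1))^m = (\<Sum>i\<le>m. of_nat (m choose i) * (of_nat j + x)^i)" for j
    using binomial_ring[of "of_nat j + x" 1 m] by (simp add: algebra_simps)
  have "D l m (x + 1) = (\<Sum>j\<le>l. \<Sum>i\<le>m. (-1)^j * of_nat (l choose j) * (of_nat (m choose i) * (of_nat j + x)^i))"
    by (simp add: D_def e sum_distrib_left)
  also have "\<dots> = (\<Sum>i\<le>m. \<Sum>j\<le>l. (-1)^j * of_nat (l choose j) * (of_nat (m choose i) * (of_nat j + x)^i))"
    by (rule sum.swap)
  also have "\<dots> = (\<Sum>i\<le>m. of_nat (m choose i) * D l i x)"
    unfolding D_def sum_distrib_left by (rule sum.cong[OF refl], rule sum.cong[OF refl]) (simp add: algebra_simps)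
  finally show ?thesis .
qed

lemma D_vanish: "m < l \<Longrightarrow> D l m x = 0"
proof (induction l arbitrary: m x)
  case 0 then show ?case by simp
next
  case (Suc l)
  have z: "\<And>i. i < m \<Longrightarrow> D l i x = 0" using Suc.IH Suc.prems by simp
  have "(\<Sum>i\<le>m. of_nat (m choose i) * D l i x) = (\<Sum>i<m. of_nat (m choose i) * D l i x) + D l m x"
    by (simp add: lessThan_Suc_atMost[symmetric])
  also have "(\<Sum>i<m. of_nat (m choose i) * D l i x) = 0" by (simp add: z)
  finally show ?case by (simp add: D_Suc D_shift)
qed

lemma polyB_D: "polyB k n x = (\<Sum>l\<le>n. cB k l * D l n x)"
  by (simp add: polyB_def cB_def D_def atLeast0AtMost)

lemma polyB_ext: "n \<le> N \<Longrightarrow> polyB k n x = (\<Sum>l\<le>N. cB k l * D l n x)"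
proof -
  assume "n \<le> N"
  have "(\<Sum>l\<le>N. cB k l * D l n x) = (\<Sum>l\<le>n. cB k l * D l n x) + (\<Sum>l\<in>{n<..N}. cB k l * D l n x)"
  proof -
    have "{..N} = {..n} \<union> {n<..N}" using \<open>n \<le> N\<close> by auto
    then show ?thesis by (simp only:) (rule sum.union_disjoint, auto)
  qed
  also have "(\<Sum>l\<in>{n<..N}. cB k l * D l n x) = 0" by (simp add: D_vanish)
  finally show ?thesis by (simp add: polyB_D)
qed

lemma appell: "polyB k n (x + y) = (\<Sum>i\<le>n. of_nat (n choose i) * polyB k (n - i) x * y^i)"
proof -
  have e: "(of_nat j + (x + y))^n = (\<Sum>i\<le>n. of_nat (n choose i) * y^i * (of_nat j + x)^(n-i))" for j
    using binomial_ring[of y "of_nat j + x" n] by (simp add: algebra_simps)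
  have "polyB k n (x + y) = (\<Sum>l\<le>n. \<Sum>j\<le>l. \<Sum>i\<le>n. cB k l * ((-1)^j * of_nat (l choose j) * (of_nat (n choose i) * y^i * (of_nat j + x)^(n-i))))"
    by (simp add: polyB_D D_def e sum_distrib_left)
  also have "\<dots> = (\<Sum>l\<le>n. \<Sum>i\<le>n. \<Sum>j\<le>l. cB k l * ((-1)^j * of_nat (l choose j) * (of_nat (n choose i) * y^i * (of_nat j + x)^(n-i))))"
    by (rule sum.cong[OF refl], rule sum.swap)
  also have "\<dots> = (\<Sum>i\<le>n. \<Sum>l\<le>n. \<Sum>j\<le>l. cB k l * ((-1)^j * of_nat (l choose j) * (of_nat (n choose i) * y^i * (of_nat j + x)^(n-i))))"
    by (rule sum.swap)
  also have "\<dots> = (\<Sum>i\<le>n. of_nat (n choose i) * y^i * (\<Sum>l\<le>n. cB k l * D l (n - i) x))"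
    unfolding D_def sum_distrib_left
    by (rule sum.cong[OF refl], rule sum.cong[OF refl], rule sum.cong[OF refl]) (simp add: algebra_simps)
  also have "\<dots> = (\<Sum>i\<le>n. of_nat (n choose i) * polyB k (n - i) x * y^i)"
    by (rule sum.cong[OF refl]) (simp add: polyB_ext[symmetric])
  finally show ?thesis .
qed

lemma ff_fact: "(-1)^l * (of_nat (fact (l + r)) :: complex) = of_nat (fact r) * ff (- (of_nat r + 1)) l"
proof (induction l)
  case 0 then show ?case by simp
next
  case (Suc l)
  define a :: complex where "a = - (of_nat r + 1)"
  have "(-1)^Suc l * (of_nat (fact (Suc l + r)) :: complex)
      = ((-1)^l * of_nat (fact (l + r))) * (a - of_nat l)"
    by (simp add: a_def algebra_simps)
  also have "\<dots> = (of_nat (fact r) * ff a l) * (a - of_nat l)"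
    by (simp only: Suc.IH a_def)
  also have "\<dots> = of_nat (fact r) * ff a (Suc l)"
    by (simp only: ff_Suc mult.assoc)
  finally show ?case by (simp only: a_def)
qed

lemma F_lem: "(\<Sum>l=0..n. of_int (stirling2 n l) * (-1)^l * of_nat (fact (l + r)))
   = (of_nat (fact r) :: complex) * (- (of_nat r + 1))^n"
proof -
  have "(\<Sum>l=0..n. of_int (stirling2 n l) * (-1)^l * (of_nat (fact (l + r)) :: complex))
     = (\<Sum>l\<le>n. of_nat (fact r) * (of_nat (Stirling n l) * ff (- (of_nat r + 1)) l))"
    unfolding atLeast0AtMost
  proof (rule sum.cong[OF refl])
    fix l
    have "of_int (stirling2 n l) * (-1)^l * (of_nat (fact (l + r)) :: complex)
       = of_nat (Stirling n l) * ((-1)^l * of_nat (fact (l + r)))"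
      by (simp add: stirling2_Stirling)
    also have "\<dots> = of_nat (Stirling n l) * (of_nat (fact r) * ff (- (of_nat r + 1)) l)"
      by (simp only: ff_fact)
    finally show "of_int (stirling2 n l) * (-1)^l * (of_nat (fact (l + r)) :: complex)
       = of_nat (fact r) * (of_nat (Stirling n l) * ff (- (of_nat r + 1)) l)"
      by (simp only: mult.left_commute)
  qed
  also have "\<dots> = of_nat (fact r) * (- (of_nat r + 1))^n"
    by (simp only: sum_distrib_left[symmetric] stir_ff)
  finally show ?thesis .
qed

lemma G_lem: "(\<Sum>l=0..n. of_int (stirling2 (n + 1) (l + 1)) * (-1)^l * of_nat (fact (l + r)))
   = (of_nat (fact r) :: complex) * (- of_nat r)^n"
proof -
  have a: "- (of_nat r + 1) = (- of_nat r - 1 :: complex)" by simp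
  have "(\<Sum>l=0..n. of_int (stirling2 (n + 1) (l + 1)) * (-1)^l * (of_nat (fact (l + r)) :: complex))
     = (\<Sum>l\<le>n. of_nat (fact r) * (of_nat (Stirling (Suc n) (Suc l)) * ff (- of_nat r - 1) l))"
    unfolding atLeast0AtMost
  proof (rule sum.cong[OF refl])
    fix l
    have "of_int (stirling2 (n + 1) (l + 1)) * (-1)^l * (of_nat (fact (l + r)) :: complex)
       = of_nat (Stirling (Suc n) (Suc l)) * ((-1)^l * of_nat (fact (l + r)))"
      by (simp only: stirling2_Stirling of_int_of_nat_eq Suc_eq_plus1 mult.assoc)
    also have "\<dots> = of_nat (Stirling (Suc n) (Suc l)) * (of_nat (fact r) * ff (- of_nat r - 1) l)"
      by (simp only: ff_fact a)
    finally show "of_int (stirling2 (n + 1) (l + 1)) * (-1)^l * (of_nat (fact (l + r)) :: complex)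
       = of_nat (fact r) * (of_nat (Stirling (Suc n) (Suc l)) * ff (- of_nat r - 1) l)"
      by (simp only: mult.left_commute)
  qed
  also have "\<dots> = of_nat (fact r) * (- of_nat r)^n"
  proof -
    have "(\<Sum>l\<le>n. of_nat (Stirling (Suc n) (Suc l)) * ff (- of_nat r - 1) l) = (- of_nat r :: complex)^n"
      using stir_ff2[of n "- of_nat r"] by simp
    then show ?thesis by (simp only: sum_distrib_left[symmetric])
  qed
  finally show ?thesis .
qed

lemma appell2: "(\<Sum>j=0..p. of_nat (p choose j) * polyB k (p - j) x * y^j) = polyB k p (x + y)"
  by (simp add: appell atLeast0AtMost)

lemma combine:
  fixes H :: "nat \<Rightarrow> complex"
  assumes H: "\<And>n. H n = c * y ^ n"
  shows "(\<Sum>j1=0..p1. \<Sum>j2=0..p2.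
      of_nat (p1 choose j1) * of_nat (p2 choose j2) * polyB k1 (p1 - j1) x1 * polyB k2 (p2 - j2) x2 * H (j1 + j2))
    = c * polyB k1 p1 (x1 + y) * polyB k2 p2 (x2 + y)"
proof -
  have "(\<Sum>j1=0..p1. \<Sum>j2=0..p2.
      of_nat (p1 choose j1) * of_nat (p2 choose j2) * polyB k1 (p1 - j1) x1 * polyB k2 (p2 - j2) x2 * H (j1 + j2))
    = c * ((\<Sum>j1=0..p1. of_nat (p1 choose j1) * polyB k1 (p1 - j1) x1 * y^j1)
          * (\<Sum>j2=0..p2. of_nat (p2 choose j2) * polyB k2 (p2 - j2) x2 * y^j2))"
  proof -
    have "c * ((\<Sum>j1=0..p1. of_nat (p1 choose j1) * polyB k1 (p1 - j1) x1 * y^j1)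
          * (\<Sum>j2=0..p2. of_nat (p2 choose j2) * polyB k2 (p2 - j2) x2 * y^j2))
       = (\<Sum>j1=0..p1. \<Sum>j2=0..p2. c * ((of_nat (p1 choose j1) * polyB k1 (p1 - j1) x1 * y^j1)
            * (of_nat (p2 choose j2) * polyB k2 (p2 - j2) x2 * y^j2)))"
      unfolding sum_product by (simp only: sum_distrib_left)
    also have "\<dots> = (\<Sum>j1=0..p1. \<Sum>j2=0..p2.
      of_nat (p1 choose j1) * of_nat (p2 choose j2) * polyB k1 (p1 - j1) x1 * polyB k2 (p2 - j2) x2 * H (j1 + j2))"
      by (rule sum.cong[OF refl], rule sum.cong[OF refl]) (simp add: H power_add algebra_simps)
    finally show ?thesis by (rule sym)
  qed
  then show ?thesis by (simp add: appell2)
qed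

theorem mainTheorem12:
  fixes p1 p2 r :: nat and k1 k2 :: int and x1 x2 :: complex
  defines "LHS \<equiv> (\<Sum>j1=0..p1. \<Sum>j2=0..p2. \<Sum>l=0..j1+j2.
      of_nat (p1 choose j1) * of_nat (p2 choose j2)
      * polyB k1 (p1 - j1) x1 * polyB k2 (p2 - j2) x2
      * of_int (stirling2 (j1 + j2) l) * (-1)^l * of_nat (fact (l + r)))"
  shows "LHS = of_nat (fact r) * polyB k1 p1 (x1 - of_nat r - 1) * polyB k2 p2 (x2 - of_nat r - 1)
     \<and> LHS = (\<Sum>j1=0..p1. \<Sum>j2=0..p2. \<Sum>l=0..j1+j2.
      of_nat (p1 choose j1) * of_nat (p2 choose j2)
      * polyB k1 (p1 - j1) (x1 - 1) * polyB k2 (p2 - j2) (x2 - 1)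
      * of_int (stirling2 (j1 + j2 + 1) (l + 1)) * (-1)^l * of_nat (fact (l + r)))"
proof -
  define F where "F n = (\<Sum>l=0..n. of_int (stirling2 n l) * (-1)^l * (of_nat (fact (l + r)) :: complex))" for n
  define G where "G n = (\<Sum>l=0..n. of_int (stirling2 (n + 1) (l + 1)) * (-1)^l * (of_nat (fact (l + r)) :: complex))" for n
  have L1: "LHS = (\<Sum>j1=0..p1. \<Sum>j2=0..p2.
      of_nat (p1 choose j1) * of_nat (p2 choose j2) * polyB k1 (p1 - j1) x1 * polyB k2 (p2 - j2) x2 * F (j1 + j2))"
    unfolding LHS_def F_def sum_distrib_left
    by (rule sum.cong[OF refl], rule sum.cong[OF refl], rule sum.cong[OF refl]) (simp add: algebra_simps)
  have R2: "(\<Sum>j1=0..p1. \<Sum>j2=0..p2. \<Sum>l=0..j1+j2.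
      of_nat (p1 choose j1) * of_nat (p2 choose j2)
      * polyB k1 (p1 - j1) (x1 - 1) * polyB k2 (p2 - j2) (x2 - 1)
      * of_int (stirling2 (j1 + j2 + 1) (l + 1)) * (-1)^l * of_nat (fact (l + r)))
    = (\<Sum>j1=0..p1. \<Sum>j2=0..p2.
      of_nat (p1 choose j1) * of_nat (p2 choose j2) * polyB k1 (p1 - j1) (x1 - 1) * polyB k2 (p2 - j2) (x2 - 1) * G (j1 + j2))"
    unfolding G_def sum_distrib_left
    by (rule sum.cong[OF refl], rule sum.cong[OF refl], rule sum.cong[OF refl]) (simp add: algebra_simps)
  have e1: "LHS = of_nat (fact r) * polyB k1 p1 (x1 + - (of_nat r + 1)) * polyB k2 p2 (x2 + - (of_nat r + 1))"
    unfolding L1 by (rule combine) (unfold F_def, rule F_lem)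
  have e2: "(\<Sum>j1=0..p1. \<Sum>j2=0..p2.
      of_nat (p1 choose j1) * of_nat (p2 choose j2) * polyB k1 (p1 - j1) (x1 - 1) * polyB k2 (p2 - j2) (x2 - 1) * G (j1 + j2))
     = of_nat (fact r) * polyB k1 p1 (x1 - 1 + - of_nat r) * polyB k2 p2 (x2 - 1 + - of_nat r)"
    by (rule combine) (unfold G_def, rule G_lem)
  have a1: "x1 + - (of_nat r + 1) = x1 - of_nat r - 1" "x2 + - (of_nat r + 1) = x2 - of_nat r - 1"
    "x1 - 1 + - of_nat r = x1 - of_nat r - 1" "x2 - 1 + - of_nat r = x2 - of_nat r - 1"
    by simp_all
  show ?thesis using e1 e2 R2 unfolding a1 by simp
qed

end
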